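(* Let $f(z)=z^3\prod_{n=1}^{\infty}(1+z/a_n)^{2p_n}$ be a transcendental entire function, where $(a_n)$ is a positive strictly increasing sequence and $p_n\in\mathbb N$. Let $g$ be the associated function defined below and let $r_0=10$, $r_{n}=g^{n}(10)$ for $n\ge1$. Suppose there exists a sequence of positive integers $(N_k)_{k\in\mathbb N}$ such that $$f^{N_1}\big((-r_2,0]\big)\subset(-r_{N_1},0]$$ and, for all $k\ge2$, $$f^{N_k}\big((-r_{N_1+\cdots+N_{k-1}+2k},0]\big)\subset(-r_{N_1+\cdots+N_k},0].$$ Then $A(f)\cap(-\infty,0]=\emptyset$.
   Context: The function $g:[0,\infty)\to[0,\infty)$ is defined by $g(r)=r^3$ for $0\le r<a_1$ and $g(r)=r^3\prod_{n:\,a_n\le r}(1+r/a_n)^{2p_n}$ for $r\ge a_1$; $g^n$ is its $n$th iterate. $f^n$ denotes the $n$th iterate of $f$, $M(r)=\max_{|z|=r}|f(z)|$ and $M^n$ its $n$th iterate. For $R>0$ with $M(r)>r$ for $r\ge R$, $A_R(f)=\{z:|f^n(z)|\ge M^n(R)\text{ for all }n\in\mathbb N\}$ and $A(f)=\bigcup_{n\in\mathbb N}f^{-n}(A_R(f))$ (independent of the choice of such $R$). *)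

theory Defs
  imports "HOL-Analysis.Analysis" "HOL-Computational_Algebra.Polynomial"
begin

text \<open>The sequences are indexed from 0: a 0 plays the role of a_1, etc.\<close>

definition gfun :: "(nat \<Rightarrow> real) \<Rightarrow> (nat \<Rightarrow> nat) \<Rightarrow> real \<Rightarrow> real" where
  "gfun a p r = (if r < a 0 then r ^ 3
     else r ^ 3 * (\<Prod>n\<in>{n. a n \<le> r}. (1 + r / a n) ^ (2 * p n)))"

definition rseq :: "(nat \<Rightarrow> real) \<Rightarrow> (nat \<Rightarrow> nat) \<Rightarrow> nat \<Rightarrow> real" where
  "rseq a p n = (gfun a p ^^ n) 10"

definition maxmod :: "(complex \<Rightarrow> complex) \<Rightarrow> real \<Rightarrow> real" where
  "maxmod f r = Sup {norm (f z) | z. norm z = r}"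

definition A_R :: "(complex \<Rightarrow> complex) \<Rightarrow> real \<Rightarrow> complex set" where
  "A_R f R = {z. \<forall>n\<ge>1. norm ((f ^^ n) z) \<ge> (maxmod f ^^ n) R}"

definition fast_escaping :: "(complex \<Rightarrow> complex) \<Rightarrow> real \<Rightarrow> complex set" where
  "fast_escaping f R = (\<Union>n\<in>{1..}. (f ^^ n) -` A_R f R)"

end

theory Submission
  imports Defs
begin


lemma factor_real:
  "(1 + complex_of_real x / complex_of_real (a n)) ^ (2 * p n)
     = complex_of_real ((1 + x / a n) ^ (2 * p n))"
  by simp

lemma a_unbounded:
  fixes a :: "nat \<Rightarrow> real" and p :: "nat \<Rightarrow> nat"
  assumes a_pos: "\<And>n. a n > 0" and p_pos: "\<And>n. p n \<ge> 1"
    and conv: "convergent_prod (\<lambda>n. (1 + 1 / complex_of_real (a n)) ^ (2 * p n))"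
  shows "finite {n. a n \<le> t}"
proof -
  define rt where "rt = max t 1"
  have rt: "rt > 0" "t \<le> rt" by (auto simp: rt_def)
  have "(\<lambda>n. (1 + 1 / complex_of_real (a n)) ^ (2 * p n)) \<longlonglongrightarrow> 1"
    by (rule convergent_prod_imp_LIMSEQ[OF conv])
  hence "(\<lambda>n. complex_of_real ((1 + 1 / a n) ^ (2 * p n))) \<longlonglongrightarrow> 1"
    using factor_real[of 1 a] by simp
  hence "(\<lambda>n. Re (complex_of_real ((1 + 1 / a n) ^ (2 * p n)))) \<longlonglongrightarrow> Re 1"
    by (rule tendsto_Re)
  hence L: "(\<lambda>n. (1 + 1 / a n) ^ (2 * p n)) \<longlonglongrightarrow> 1" by simp
  have "1 < 1 + 1 / rt" using rt by simp
  hence ev: "eventually (\<lambda>n. (1 + 1 / a n) ^ (2 * p n) < 1 + 1/rt) sequentially"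
    using order_tendstoD(2)[OF L] by blast
  have "eventually (\<lambda>n. a n > t) sequentially"
  proof (rule eventually_mono[OF ev])
    fix n assume h: "(1 + 1 / a n) ^ (2 * p n) < 1 + 1/rt"
    show "a n > t"
    proof (rule ccontr)
      assume "\<not> a n > t"
      hence an: "a n \<le> rt" using rt by simp
      have "1 + 1/rt \<le> 1 + 1 / a n" using an a_pos[of n] rt
        by (simp add: frac_le)
      also have "\<dots> = (1 + 1 / a n) ^ 1" by simp
      also have "\<dots> \<le> (1 + 1 / a n) ^ (2 * p n)"
        using p_pos[of n] a_pos[of n] by (intro power_increasing) auto
      finally show False using h by simp
    qed
  qed
  then obtain K where K: "\<And>n. n \<ge> K \<Longrightarrow> a n > t"
    by (auto simp: eventually_at_top_linorder)
  have "{n. a n \<le> t} \<subseteq> {..<K}" using K by (force simp: not_le)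
  thus ?thesis using finite_subset by blast
qed

lemma gfun_eq:
  assumes "strict_mono a"
  shows "gfun a p t = t ^ 3 * (\<Prod>n\<in>{n. a n \<le> t}. (1 + t / a n) ^ (2 * p n))"
proof (cases "t < a 0")
  case True
  have "mono a" using assms strict_mono_mono by blast
  hence "{n. a n \<le> t} = {}" using True by (auto simp: mono_def) (metis le0 not_le order.trans)
  thus ?thesis using True by (simp add: gfun_def)
qed (simp add: gfun_def)

lemma gfun_mono:
  fixes a :: "nat \<Rightarrow> real"
  assumes sm: "strict_mono a" and a_pos: "\<And>n. a n > 0"
    and fin: "\<And>t. finite {n. a n \<le> t}"
    and st: "0 \<le> s" "s \<le> t"
  shows "gfun a p s \<le> gfun a p t"
proof -
  have "(\<Prod>n\<in>{n. a n \<le> s}. (1 + s / a n) ^ (2 * p n))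
        \<le> (\<Prod>n\<in>{n. a n \<le> s}. (1 + t / a n) ^ (2 * p n))"
    using st a_pos by (intro prod_mono conjI power_mono)
      (auto intro!: divide_right_mono add_nonneg_nonneg less_imp_le[OF a_pos] divide_nonneg_pos)
  also have "\<dots> \<le> (\<Prod>n\<in>{n. a n \<le> t}. (1 + t / a n) ^ (2 * p n))"
    using st a_pos fin by (intro prod_mono2) auto
  finally have 1: "(\<Prod>n\<in>{n. a n \<le> s}. (1 + s / a n) ^ (2 * p n))
        \<le> (\<Prod>n\<in>{n. a n \<le> t}. (1 + t / a n) ^ (2 * p n))" .
  have "s ^ 3 \<le> t ^ 3" using st by (intro power_mono) auto
  thus ?thesis unfolding gfun_eq[OF sm] using 1 st a_pos
    by (intro mult_mono) (auto intro!: prod_nonneg)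
qed

lemma gfun_ge:
  fixes a :: "nat \<Rightarrow> real"
  assumes sm: "strict_mono a" and a_pos: "\<And>n. a n > 0" and "0 \<le> t"
  shows "t ^ 3 \<le> gfun a p t"
proof -
  have "1 \<le> (\<Prod>n\<in>{n. a n \<le> t}. (1 + t / a n) ^ (2 * p n))"
    using assms by (intro prod_ge_1 one_le_power) (auto intro!: less_imp_le[OF a_pos] divide_nonneg_pos)
  thus ?thesis unfolding gfun_eq[OF sm] using assms
    by (metis mult_le_cancel_left1 nle_le not_less zero_le_power)
qed



lemma prod_real:
  fixes a :: "nat \<Rightarrow> real" and p :: "nat \<Rightarrow> nat"
  assumes conv: "convergent_prod (\<lambda>n. (1 + complex_of_real x / complex_of_real (a n)) ^ (2 * p n))"
  defines "P \<equiv> (\<Prod>n. (1 + complex_of_real x / complex_of_real (a n)) ^ (2 * p n))"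
  shows "(\<lambda>n. \<Prod>i\<le>n. (1 + x / a i) ^ (2 * p i)) \<longlonglongrightarrow> Re P"
    and "P = complex_of_real (Re P)"
proof -
  have L: "(\<lambda>n. \<Prod>i\<le>n. (1 + complex_of_real x / complex_of_real (a i)) ^ (2 * p i)) \<longlonglongrightarrow> P"
    unfolding P_def by (rule convergent_prod_LIMSEQ[OF conv])
  have eq: "(\<Prod>i\<le>n. (1 + complex_of_real x / complex_of_real (a i)) ^ (2 * p i))
      = complex_of_real (\<Prod>i\<le>n. (1 + x / a i) ^ (2 * p i))" for n
    unfolding factor_real of_real_prod by (rule refl)
  have L2: "(\<lambda>n. complex_of_real (\<Prod>i\<le>n. (1 + x / a i) ^ (2 * p i))) \<longlonglongrightarrow> P"
    using L unfolding eq .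
  from tendsto_Re[OF L2] show "(\<lambda>n. \<Prod>i\<le>n. (1 + x / a i) ^ (2 * p i)) \<longlonglongrightarrow> Re P"
    unfolding Re_complex_of_real .
  from tendsto_Im[OF L2] have "(\<lambda>n. 0) \<longlonglongrightarrow> Im P" unfolding Im_complex_of_real .
  hence "Im P = 0" by (rule LIMSEQ_unique[OF tendsto_const, symmetric])
  thus "P = complex_of_real (Re P)" by (simp add: complex_eq_iff)
qed

lemma f_neg:
  fixes f :: "complex \<Rightarrow> complex" and a :: "nat \<Rightarrow> real" and p :: "nat \<Rightarrow> nat"
  assumes a_pos: "\<And>n. a n > 0" and sm: "strict_mono a"
    and fin: "\<And>t. finite {n. a n \<le> t}"
    and conv: "\<And>z. convergent_prod (\<lambda>n. (1 + z / complex_of_real (a n)) ^ (2 * p n))"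
    and f_def: "\<And>z. f z = z ^ 3 * (\<Prod>n. (1 + z / complex_of_real (a n)) ^ (2 * p n))"
    and x: "x \<le> 0"
  shows "\<exists>y. f (complex_of_real x) = complex_of_real y \<and> y \<le> 0 \<and> - y \<le> gfun a p (- x)"
proof -
  define P where "P = (\<Prod>n. (1 + complex_of_real x / complex_of_real (a n)) ^ (2 * p n))"
  define t where "t = - x"
  have t: "t \<ge> 0" using x by (simp add: t_def)
  define E where "E = {n. a n \<le> t}"
  have finE: "finite E" using fin by (simp add: E_def)
  then obtain K where K: "E \<subseteq> {..<K}" using finite_nat_iff_bounded by blast
  define c where "c i = (1 + x / a i) ^ (2 * p i)" for i
  define b where "b i = (1 + t / a i) ^ (2 * p i)" for i
  have c_nn: "0 \<le> c i" for i unfolding c_def by (simp add: zero_le_even_power)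
  have c_le1: "c i \<le> 1" if "i \<notin> E" for i
  proof -
    have "a i > t" using that by (simp add: E_def)
    hence "t / a i \<le> 1" using a_pos[of i] by simp
    moreover have "0 \<le> t / a i" using t a_pos[of i] by simp
    ultimately have "0 \<le> 1 + x / a i" "1 + x / a i \<le> 1" by (auto simp: t_def)
    thus ?thesis unfolding c_def by (intro power_le_one) auto
  qed
  have c_le_b: "c i \<le> b i" for i
  proof -
    have "0 \<le> t / a i" using t a_pos[of i] by simp
    hence "\<bar>1 + x / a i\<bar> \<le> 1 + t / a i" by (auto simp: t_def)
    hence "\<bar>1 + x / a i\<bar> ^ (2 * p i) \<le> (1 + t / a i) ^ (2 * p i)"
      by (intro power_mono) auto
    thus ?thesis unfolding c_def b_def by (simp add: power_even_abs)
  qed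
  have Lim: "(\<lambda>n. \<Prod>i\<le>n. c i) \<longlonglongrightarrow> Re P"
    using prod_real(1)[OF conv[of "complex_of_real x"]] unfolding P_def c_def .
  have PP: "P = complex_of_real (Re P)"
    using prod_real(2)[OF conv[of "complex_of_real x"]] unfolding P_def .
  have nn: "0 \<le> Re P"
    by (rule LIMSEQ_le_const[OF Lim]) (auto intro!: prod_nonneg c_nn)
  have ub: "Re P \<le> (\<Prod>i\<in>E. b i)"
  proof (rule LIMSEQ_le_const2[OF Lim], rule exI[of _ K], intro allI impI)
    fix n assume n: "n \<ge> K"
    have sub: "E \<subseteq> {..n}" using K n by auto
    have "(\<Prod>i\<le>n. c i) = (\<Prod>i\<in>{..n} - E. c i) * (\<Prod>i\<in>E. c i)"
      using prod.subset_diff[OF sub] by simp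
    also have "\<dots> \<le> 1 * (\<Prod>i\<in>E. b i)"
      by (intro mult_mono prod_le_1 prod_mono) (auto intro!: prod_nonneg c_nn c_le1 c_le_b)
    finally show "(\<Prod>i\<le>n. c i) \<le> (\<Prod>i\<in>E. b i)" by simp
  qed
  have fx: "f (complex_of_real x) = complex_of_real (x ^ 3 * Re P)"
  proof -
    have "f (complex_of_real x) = complex_of_real x ^ 3 * P" unfolding P_def by (rule f_def)
    also have "\<dots> = complex_of_real x ^ 3 * complex_of_real (Re P)" by (subst PP) (rule refl)
    finally show ?thesis by simp
  qed
  show ?thesis
  proof (intro exI conjI)
    show "f (complex_of_real x) = complex_of_real (x ^ 3 * Re P)" by (rule fx)
    show "x ^ 3 * Re P \<le> 0" using x nn
      by (simp add: mult_nonpos_nonneg power_odd_eq)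
    have "- (x ^ 3 * Re P) = t ^ 3 * Re P" by (simp add: t_def)
    also have "\<dots> \<le> t ^ 3 * (\<Prod>i\<in>E. b i)" using ub t by (intro mult_left_mono) auto
    also have "\<dots> = gfun a p (- x)" unfolding gfun_eq[OF sm] t_def[symmetric] E_def b_def ..
    finally show "- (x ^ 3 * Re P) \<le> gfun a p (- x)" .
  qed
qed

lemma f_pos:
  fixes f :: "complex \<Rightarrow> complex" and a :: "nat \<Rightarrow> real" and p :: "nat \<Rightarrow> nat"
  assumes a_pos: "\<And>n. a n > 0" and sm: "strict_mono a"
    and fin: "\<And>t. finite {n. a n \<le> t}"
    and conv: "\<And>z. convergent_prod (\<lambda>n. (1 + z / complex_of_real (a n)) ^ (2 * p n))"
    and f_def: "\<And>z. f z = z ^ 3 * (\<Prod>n. (1 + z / complex_of_real (a n)) ^ (2 * p n))"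
    and t: "t \<ge> 0"
  shows "gfun a p t \<le> norm (f (complex_of_real t))"
proof -
  define P where "P = (\<Prod>n. (1 + complex_of_real t / complex_of_real (a n)) ^ (2 * p n))"
  define E where "E = {n. a n \<le> t}"
  have finE: "finite E" using fin by (simp add: E_def)
  then obtain K where K: "E \<subseteq> {..<K}" using finite_nat_iff_bounded by blast
  define b where "b i = (1 + t / a i) ^ (2 * p i)" for i
  have b1: "1 \<le> b i" for i unfolding b_def using t a_pos[of i]
    by (intro one_le_power) (auto intro!: divide_nonneg_pos)
  have Lim: "(\<lambda>n. \<Prod>i\<le>n. b i) \<longlonglongrightarrow> Re P"
    using prod_real(1)[OF conv[of "complex_of_real t"]] unfolding P_def b_def .
  have PP: "P = complex_of_real (Re P)"
    using prod_real(2)[OF conv[of "complex_of_real t"]] unfolding P_def .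
  have lb: "(\<Prod>i\<in>E. b i) \<le> Re P"
  proof (rule LIMSEQ_le_const[OF Lim], rule exI[of _ K], intro allI impI)
    fix n assume n: "n \<ge> K"
    have sub: "E \<subseteq> {..n}" using K n by auto
    show "(\<Prod>i\<in>E. b i) \<le> (\<Prod>i\<le>n. b i)"
      by (rule prod_mono2[OF _ sub]) (auto intro: order.trans[OF zero_le_one b1] b1)
  qed
  have fx: "f (complex_of_real t) = complex_of_real (t ^ 3 * Re P)"
  proof -
    have "f (complex_of_real t) = complex_of_real t ^ 3 * P" unfolding P_def by (rule f_def)
    also have "\<dots> = complex_of_real t ^ 3 * complex_of_real (Re P)" by (subst PP) (rule refl)
    finally show ?thesis by simp
  qed
  have "gfun a p t = t ^ 3 * (\<Prod>i\<in>E. b i)" unfolding gfun_eq[OF sm] E_def b_def ..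
  also have "\<dots> \<le> t ^ 3 * Re P" using lb t by (intro mult_left_mono) auto
  also have "\<dots> \<le> norm (f (complex_of_real t))" unfolding fx norm_of_real by simp
  finally show ?thesis .
qed



lemma maxmod_bdd:
  fixes f :: "complex \<Rightarrow> complex"
  assumes cont: "continuous_on UNIV f"
  shows "bdd_above {norm (f z) | z. norm z = r}"
proof -
  have eq: "{norm (f z) | z. norm z = r} = (\<lambda>z. norm (f z)) ` sphere 0 r" by auto
  have "compact ((\<lambda>z. norm (f z)) ` sphere (0::complex) r)"
    by (intro compact_continuous_image continuous_on_norm continuous_on_subset[OF cont]) auto
  thus ?thesis unfolding eq by (intro bounded_imp_bdd_above compact_imp_bounded)
qed

lemma maxmod_ge:
  fixes f :: "complex \<Rightarrow> complex"
  assumes cont: "continuous_on UNIV f" and "norm z = r"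
  shows "norm (f z) \<le> maxmod f r"
  unfolding maxmod_def using assms by (intro cSup_upper maxmod_bdd) auto

lemma maxmod_gt:
  fixes f :: "complex \<Rightarrow> complex"
  assumes cont: "continuous_on UNIV f" and r: "r \<ge> 0" and "L < maxmod f r"
  shows "\<exists>z. norm z = r \<and> L < norm (f z)"
proof -
  have ne: "{norm (f z) | z. norm z = r} \<noteq> {}"
    using r by (auto intro!: exI[of _ "complex_of_real r"])
  show ?thesis using assms(3) unfolding maxmod_def less_cSup_iff[OF ne maxmod_bdd[OF cont]]
    by auto
qed

lemma iter_big:
  fixes f :: "complex \<Rightarrow> complex"
  assumes cont: "continuous_on UNIV f" and R: "R > 0"
    and MR: "\<forall>r\<ge>R. maxmod f r > r"
  shows "\<exists>d. (maxmod f ^^ d) R \<ge> B"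
proof (rule ccontr)
  assume "\<not> ?thesis"
  hence lt: "\<And>d. (maxmod f ^^ d) R < B" by (simp add: not_le)
  define s where "s n = (maxmod f ^^ n) R" for n
  have sR: "s n \<ge> R" for n
  proof (induction n)
    case 0 thus ?case by (simp add: s_def)
  next
    case (Suc n)
    have "s (Suc n) = maxmod f (s n)" by (simp add: s_def)
    thus ?case using MR[rule_format, OF Suc.IH] Suc.IH by simp
  qed
  have sSuc: "s (Suc n) > s n" for n
    using MR sR[of n] by (simp add: s_def)
  have inc: "incseq s" using sSuc by (intro incseq_SucI less_imp_le)
  have sB: "\<forall>i. s i \<le> B" using lt unfolding s_def by (simp add: less_imp_le)
  obtain L where L: "s \<longlonglongrightarrow> L" "\<forall>i. s i \<le> L"
    using incseq_convergent[OF inc sB] by blast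
  have sL: "s n < L" for n using sSuc[of n] L(2) by (meson less_le_trans)
  have LR: "L \<ge> R" using sR[of 0] L(2) by (meson order.trans)
  hence "maxmod f L > L" using MR by blast
  then obtain z0 where z0: "norm z0 = L" "L < norm (f z0)"
    using maxmod_gt[OF cont, of L L] LR R by auto
  define z where "z n = complex_of_real (s n / L) * z0" for n
  have Lpos: "L > 0" using LR R by simp
  have A: "z \<longlonglongrightarrow> complex_of_real (L / L) * z0"
    unfolding z_def by (intro tendsto_intros L(1)) (use Lpos in simp)
  have B: "complex_of_real (L / L) * z0 = z0" using Lpos by simp
  have zl: "z \<longlonglongrightarrow> z0" using A unfolding B .
  have "(\<lambda>n. f (z n)) \<longlonglongrightarrow> f z0"
    by (rule continuous_on_tendsto_compose[OF cont zl]) auto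
  hence "(\<lambda>n. norm (f (z n))) \<longlonglongrightarrow> norm (f z0)" by (rule tendsto_norm)
  hence "eventually (\<lambda>n. norm (f (z n)) > L) sequentially"
    using z0(2) by (rule order_tendstoD(1))
  then obtain N where N: "\<forall>n\<ge>N. norm (f (z n)) > L" unfolding eventually_sequentially by blast
  define n where "n = N"
  have n: "norm (f (z n)) > L" using N by (simp add: n_def)
  have nz: "norm (z n) = s n" using z0 Lpos sR[of n] R by (simp add: z_def norm_mult norm_divide)
  have "norm (f (z n)) \<le> maxmod f (s n)" by (rule maxmod_ge[OF cont nz])
  also have "\<dots> = s (Suc n)" by (simp add: s_def)
  finally show False using n sL[of "Suc n"] by simp
qed



lemma cube_ge: "(x::real) \<ge> 10 \<Longrightarrow> x + 1 \<le> x ^ 3"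
proof -
  assume h: "x \<ge> 10"
  have "10 * 10 \<le> x * x" using h by (intro mult_mono) auto
  hence A: "100 * x \<le> x * x * x" using h by (intro mult_right_mono) auto
  have B: "x ^ 3 = x * x * x" by (simp add: power3_eq_cube)
  show ?thesis using A B h by linarith
qed

theorem lemma3p1:
  fixes f :: "complex \<Rightarrow> complex" and a :: "nat \<Rightarrow> real" and p :: "nat \<Rightarrow> nat"
  assumes a_pos: "\<And>n. a n > 0"
    and a_mono: "strict_mono a"
    and p_pos: "\<And>n. p n \<ge> 1"
    and conv: "\<And>z. convergent_prod (\<lambda>n. (1 + z / complex_of_real (a n)) ^ (2 * p n))"
    and f_def: "\<And>z. f z = z ^ 3 * (\<Prod>n. (1 + z / complex_of_real (a n)) ^ (2 * p n))"
    and entire: "f holomorphic_on UNIV"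
    and transc: "\<not> (\<exists>q :: complex poly. \<forall>z. f z = poly q z)"
    and N_pos: "\<And>k. k \<ge> 1 \<Longrightarrow> N k > (0::nat)"
    and N1: "(f ^^ N 1) ` (complex_of_real ` {- rseq a p 2 <.. 0})
               \<subseteq> complex_of_real ` {- rseq a p (N 1) <.. 0}"
    and Nk: "\<And>k. k \<ge> 2 \<Longrightarrow>
          (f ^^ N k) ` (complex_of_real ` {- rseq a p ((\<Sum>j=1..k-1. N j) + 2 * k) <.. 0})
            \<subseteq> complex_of_real ` {- rseq a p (\<Sum>j=1..k. N j) <.. 0}"
  shows "\<forall>R>0. (\<forall>r\<ge>R. maxmod f r > r) \<longrightarrow>
           fast_escaping f R \<inter> complex_of_real ` {..0} = {}"
proof -
  define g where "g = gfun a p"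
  define r where "r = rseq a p"
  define S where "S k = (\<Sum>j=1..k. N j)" for k
  have fin: "\<And>t. finite {n. a n \<le> t}"
    by (rule a_unbounded[OF a_pos p_pos conv[of 1]])
  have cont: "continuous_on UNIV f" by (rule holomorphic_on_imp_continuous_on[OF entire])
  have gmono: "\<And>s t. 0 \<le> s \<Longrightarrow> s \<le> t \<Longrightarrow> g s \<le> g t"
    unfolding g_def by (rule gfun_mono[OF a_mono a_pos fin])
  have rSuc: "r (Suc n) = g (r n)" for n by (simp add: r_def g_def rseq_def)
  have r0: "r 0 = 10" by (simp add: r_def rseq_def)
  have r_ge: "r n \<ge> 10 + real n" for n
  proof (induction n)
    case 0 thus ?case by (simp add: r0)
  next
    case (Suc n)
    have "r n + 1 \<le> r n ^ 3" using Suc by (intro cube_ge) simp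
    also have "\<dots> \<le> g (r n)" unfolding g_def using Suc by (intro gfun_ge[OF a_mono a_pos]) simp
    finally show ?case using Suc by (simp add: rSuc)
  qed
  have rstep: "r n < r (Suc n)" for n
  proof -
    have "r n + 1 \<le> r n ^ 3" using r_ge[of n] by (intro cube_ge) simp
    also have "\<dots> \<le> g (r n)" unfolding g_def using r_ge[of n] by (intro gfun_ge[OF a_mono a_pos]) simp
    finally show ?thesis by (simp add: rSuc)
  qed
  have rless: "\<And>m n. m < n \<Longrightarrow> r m < r n" using rstep by (rule lift_Suc_mono_less)
  have rstep': "r n \<le> r (Suc n)" for n using rstep[of n] by simp
  have rle: "\<And>m n. m \<le> n \<Longrightarrow> r m \<le> r n" using rstep' by (rule lift_Suc_mono_le)
  have rshift: "(g ^^ c) (r m) = r (c + m)" for c m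
    by (simp add: r_def g_def rseq_def funpow_add)
  have Ssuc: "S (Suc k) = S k + N (Suc k)" for k by (simp add: S_def)
  have Smono: "\<And>m n. m \<le> n \<Longrightarrow> S m \<le> S n"
    unfolding S_def by (intro sum_mono2) auto
  have orbit: "\<And>c y0 \<rho>. y0 \<le> 0 \<Longrightarrow> - y0 \<le> \<rho> \<Longrightarrow>
      \<exists>y. (f ^^ c) (complex_of_real y0) = complex_of_real y \<and> y \<le> 0 \<and> - y \<le> (g ^^ c) \<rho>"
  proof -
    fix c y0 \<rho> assume y0: "(y0::real) \<le> 0" "- y0 \<le> \<rho>"
    show "\<exists>y. (f ^^ c) (complex_of_real y0) = complex_of_real y \<and> y \<le> 0 \<and> - y \<le> (g ^^ c) \<rho>"
    proof (induction c)
      case 0 thus ?case using y0 by auto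
    next
      case (Suc c)
      then obtain y where y: "(f ^^ c) (complex_of_real y0) = complex_of_real y" "y \<le> 0"
        "- y \<le> (g ^^ c) \<rho>" by blast
      obtain y' where y': "f (complex_of_real y) = complex_of_real y'" "y' \<le> 0"
        "- y' \<le> g (- y)"
        using f_neg[OF a_pos a_mono fin conv f_def y(2)] unfolding g_def by blast
      have "g (- y) \<le> g ((g ^^ c) \<rho>)" using y by (intro gmono) auto
      thus ?case using y y' by (intro exI[of _ y']) auto
    qed
  qed
  have Napp: "\<And>k y. k \<ge> 2 \<Longrightarrow> y \<le> 0 \<Longrightarrow> - y < r (S (k - 1) + 2 * k) \<Longrightarrow>
      \<exists>y'. (f ^^ N k) (complex_of_real y) = complex_of_real y' \<and> y' \<le> 0 \<and> - y' < r (S k)"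
  proof -
    fix k y assume k: "(k::nat) \<ge> 2" and y: "(y::real) \<le> 0" "- y < r (S (k - 1) + 2 * k)"
    have "complex_of_real y \<in> complex_of_real ` {- rseq a p ((\<Sum>j=1..k-1. N j) + 2 * k) <.. 0}"
      using y by (auto simp: r_def S_def)
    hence "(f ^^ N k) (complex_of_real y) \<in> (f ^^ N k) ` (complex_of_real ` {- rseq a p ((\<Sum>j=1..k-1. N j) + 2 * k) <.. 0})"
      by (rule imageI)
    hence "(f ^^ N k) (complex_of_real y) \<in> complex_of_real ` {- rseq a p (\<Sum>j=1..k. N j) <.. 0}"
      using Nk[OF k] by blast
    then obtain y' where "(f ^^ N k) (complex_of_real y) = complex_of_real y'"
      "y' \<in> {- rseq a p (\<Sum>j=1..k. N j) <.. 0}" by blast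
    thus "\<exists>y'. (f ^^ N k) (complex_of_real y) = complex_of_real y' \<and> y' \<le> 0 \<and> - y' < r (S k)"
      by (auto simp: r_def S_def)
  qed
  show ?thesis
  proof (intro allI impI equals0I)
    fix R w assume R: "(R::real) > 0" and MR: "\<forall>r\<ge>R. maxmod f r > r"
      and w: "w \<in> fast_escaping f R \<inter> complex_of_real ` {..0}"
    then obtain x0 where x0: "w = complex_of_real x0" "x0 \<le> 0" by auto
    from w obtain l where l: "l \<ge> 1" "(f ^^ l) w \<in> A_R f R"
      unfolding fast_escaping_def by auto
    have low: "\<And>n. n \<ge> 1 \<Longrightarrow> (maxmod f ^^ n) R \<le> norm ((f ^^ (n + l)) w)"
      using l(2) unfolding A_R_def by (simp add: funpow_add)
    obtain d where d: "(maxmod f ^^ d) R \<ge> 10" using iter_big[OF cont R MR] by blast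
    have sd: "(maxmod f ^^ (n + d)) R \<ge> r n" for n
    proof (induction n)
      case 0 thus ?case using d by (simp add: r0)
    next
      case (Suc n)
      define s where "s = (maxmod f ^^ (n + d)) R"
      have s0: "s \<ge> 0" using Suc r_ge[of n] by (simp add: s_def)
      have "r (Suc n) = g (r n)" by (rule rSuc)
      also have "\<dots> \<le> g s" using Suc r_ge[of n] by (intro gmono) (auto simp: s_def)
      also have "\<dots> \<le> norm (f (complex_of_real s))" unfolding g_def
        by (rule f_pos[OF a_pos a_mono fin conv f_def s0])
      also have "\<dots> \<le> maxmod f s" using s0 by (intro maxmod_ge[OF cont]) simp
      also have "\<dots> = (maxmod f ^^ (Suc n + d)) R" by (simp add: s_def)
      finally show ?case .
    qed
    have lowb: "r (Suc n) \<le> norm ((f ^^ (Suc n + d + l)) w)" for n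
      using sd[of "Suc n"] low[of "Suc n + d"] by simp
    define k0 where "k0 = 2 + nat \<lceil>- x0\<rceil>"
    have k0: "k0 \<ge> 2" by (simp add: k0_def)
    have "- x0 \<le> real (nat \<lceil>- x0\<rceil>)" by linarith
    hence "- x0 < real (S (k0 - 1) + 2 * k0)" by (simp add: k0_def)
    also have "\<dots> < r (S (k0 - 1) + 2 * k0)" using r_ge[of "S (k0 - 1) + 2 * k0"] by simp
    finally have x0r: "- x0 < r (S (k0 - 1) + 2 * k0)" .
    have chain: "\<exists>y. (f ^^ (S (k0 + j) - S (k0 - 1))) w = complex_of_real y \<and> y \<le> 0
        \<and> - y < r (S (k0 + j))" for j
    proof (induction j)
      case 0
      have "S k0 = S (k0 - 1) + N k0" using Ssuc[of "k0 - 1"] k0 by simp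
      hence "S (k0 + 0) - S (k0 - 1) = N k0" by simp
      thus ?case using Napp[OF k0 x0(2) x0r] x0(1) by simp
    next
      case (Suc j)
      then obtain y where y: "(f ^^ (S (k0 + j) - S (k0 - 1))) w = complex_of_real y" "y \<le> 0"
        "- y < r (S (k0 + j))" by blast
      define k where "k = Suc (k0 + j)"
      have k: "k \<ge> 2" using k0 by (simp add: k_def)
      have "r (S (k0 + j)) \<le> r (S (k - 1) + 2 * k)" by (intro rle) (simp add: k_def)
      hence "- y < r (S (k - 1) + 2 * k)" using y by simp
      then obtain y' where y': "(f ^^ N k) (complex_of_real y) = complex_of_real y'" "y' \<le> 0"
        "- y' < r (S k)" using Napp[OF k y(2)] by blast
      have SS: "S k = S (k0 + j) + N k" using Ssuc[of "k0 + j"] by (simp add: k_def)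
      have "S (k0 - 1) \<le> S (k0 + j)" by (intro Smono) simp
      hence tm: "S k - S (k0 - 1) = N k + (S (k0 + j) - S (k0 - 1))" using SS by simp
      have "(f ^^ (S k - S (k0 - 1))) w = (f ^^ N k) ((f ^^ (S (k0 + j) - S (k0 - 1))) w)"
        unfolding tm by (simp add: funpow_add)
      thus ?case using y y' by (auto simp: k_def)
    qed
    define c where "c = S (k0 - 1) + d + l + 1"
    define k1 where "k1 = k0 + c + 1"
    have k1: "k1 \<ge> 2" "k1 - 1 = k0 + c" using k0 by (auto simp: k1_def)
    define t0 where "t0 = S (k0 + c) - S (k0 - 1)"
    obtain y0 where y0: "(f ^^ t0) w = complex_of_real y0" "y0 \<le> 0" "- y0 < r (S (k0 + c))"
      using chain[of c] unfolding t0_def by blast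
    obtain y1 where y1: "(f ^^ c) (complex_of_real y0) = complex_of_real y1" "y1 \<le> 0"
      "- y1 \<le> (g ^^ c) (r (S (k0 + c)))"
      using orbit[OF y0(2) less_imp_le[OF y0(3)]] by blast
    have "(g ^^ c) (r (S (k0 + c))) = r (c + S (k0 + c))" by (rule rshift)
    also have "\<dots> < r (S (k1 - 1) + 2 * k1)" using k1 by (intro rless) (simp add: k1_def)
    finally have "- y1 < r (S (k1 - 1) + 2 * k1)" using y1 by simp
    then obtain y2 where y2: "(f ^^ N k1) (complex_of_real y1) = complex_of_real y2" "y2 \<le> 0"
      "- y2 < r (S k1)" using Napp[OF k1(1) y1(2)] by blast
    have SS: "S k1 = S (k0 + c) + N k1" using Ssuc[of "k0 + c"] by (simp add: k1_def)
    have "S (k0 - 1) \<le> S (k0 + c)" by (intro Smono) simp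
    hence tt: "N k1 + (c + t0) = Suc (S k1) + d + l" using SS by (simp add: t0_def c_def)
    have "(f ^^ (Suc (S k1) + d + l)) w = (f ^^ N k1) ((f ^^ c) ((f ^^ t0) w))"
      unfolding tt[symmetric] by (simp add: funpow_add)
    also have "\<dots> = complex_of_real y2" using y0 y1 y2 by simp
    finally have "norm ((f ^^ (Suc (S k1) + d + l)) w) = - y2" using y2(2) by simp
    hence "r (Suc (S k1)) \<le> - y2" using lowb[of "S k1"] by simp
    moreover have "r (S k1) < r (Suc (S k1))" by (rule rstep)
    ultimately show False using y2(3) by simp
  qed
qed

end
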